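(* For every injective function $f:M\to N$, the function $\mathcal{PP}_b(f):\mathcal{PP}_b(M)\to\mathcal{PP}_b(N)$ is injective.
   Context: For a set $M$ whose elements are treated as atoms (urelements, distinct from every set built below), let $T_1=\mathcal{P}(M)$, $T_{n+1}=T_n\cup\mathcal{P}(T_n)$, and $\mathcal{PP}_b(M)=\bigcup_{n\ge 1}T_n$ (so $\mathcal{P}(M)\subseteq\mathcal{PP}_b(M)$, every subset of $\mathcal{PP}_b(M)$ of finite nesting depth is an element, but elements of $M$ are not elements of $\mathcal{PP}_b(M)$). For $f:M\to N$, $\mathcal{PP}_b(f)$ is defined recursively on $X\in\mathcal{PP}_b(M)$ by $\mathcal{PP}_b(f)(X)=\{f(x)\mid x\in X\cap M\}\cup\{\mathcal{PP}_b(f)(x)\mid x\in X\setminus M\}$. *)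

theory Defs
  imports Main
begin

text \<open>A universe with urelements is given by a type 'v, a predicate at marking the
  atoms (urelements) and a function mm giving the elements of each non-atom.
  Tlev at mm M n is the level T_(n+1) of the paper (shifted by one so that it
  starts at 0):  T_1 = P(M),  T_(n+1) = T_n \<union> P(T_n).\<close>

primrec Tlev :: "('v \<Rightarrow> bool) \<Rightarrow> ('v \<Rightarrow> 'v set) \<Rightarrow> 'v set \<Rightarrow> nat \<Rightarrow> 'v set" where
  "Tlev at mm M 0 = {X. \<not> at X \<and> mm X \<subseteq> M}"
| "Tlev at mm M (Suc n) = Tlev at mm M n \<union> {X. \<not> at X \<and> mm X \<subseteq> Tlev at mm M n}"

definition PPb :: "('v \<Rightarrow> bool) \<Rightarrow> ('v \<Rightarrow> 'v set) \<Rightarrow> 'v set \<Rightarrow> 'v set" where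
  "PPb at mm M = (\<Union>n. Tlev at mm M n)"

definition ur_universe :: "('v \<Rightarrow> bool) \<Rightarrow> ('v \<Rightarrow> 'v set) \<Rightarrow> 'v set \<Rightarrow> bool" where
  "ur_universe at mm M \<longleftrightarrow>
     (\<forall>x\<in>M. at x) \<and>
     (\<forall>X Y. \<not> at X \<longrightarrow> \<not> at Y \<longrightarrow> mm X = mm Y \<longrightarrow> X = Y) \<and>
     (\<forall>S. S \<subseteq> M \<longrightarrow> (\<exists>X. \<not> at X \<and> mm X = S)) \<and>
     (\<forall>n S. S \<subseteq> Tlev at mm M n \<longrightarrow> (\<exists>X. \<not> at X \<and> mm X = S))"

definition PPb_step :: "('v \<Rightarrow> 'v set) \<Rightarrow> 'v set \<Rightarrow> ('w \<Rightarrow> bool) \<Rightarrow> ('w \<Rightarrow> 'w set)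
    \<Rightarrow> ('v \<Rightarrow> 'w) \<Rightarrow> ('v \<Rightarrow> 'w) \<Rightarrow> 'v \<Rightarrow> 'w" where
  "PPb_step mmV M atW mmW f g X =
     (SOME Y. \<not> atW Y \<and> mmW Y = f ` (mmV X \<inter> M) \<union> g ` (mmV X - M))"

primrec PPb_lev :: "('v \<Rightarrow> bool) \<Rightarrow> ('v \<Rightarrow> 'v set) \<Rightarrow> 'v set \<Rightarrow> ('w \<Rightarrow> bool) \<Rightarrow> ('w \<Rightarrow> 'w set)
    \<Rightarrow> ('v \<Rightarrow> 'w) \<Rightarrow> nat \<Rightarrow> 'v \<Rightarrow> 'w" where
  "PPb_lev atV mmV M atW mmW f 0 = PPb_step mmV M atW mmW f (\<lambda>_. undefined)"
| "PPb_lev atV mmV M atW mmW f (Suc n) =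
     (\<lambda>X. if X \<in> Tlev atV mmV M n then PPb_lev atV mmV M atW mmW f n X
          else PPb_step mmV M atW mmW f (PPb_lev atV mmV M atW mmW f n) X)"

definition PPb_map :: "('v \<Rightarrow> bool) \<Rightarrow> ('v \<Rightarrow> 'v set) \<Rightarrow> 'v set \<Rightarrow> ('w \<Rightarrow> bool) \<Rightarrow> ('w \<Rightarrow> 'w set)
    \<Rightarrow> ('v \<Rightarrow> 'w) \<Rightarrow> 'v \<Rightarrow> 'w" where
  "PPb_map atV mmV M atW mmW f X =
     PPb_lev atV mmV M atW mmW f (LEAST n. X \<in> Tlev atV mmV M n) X"

end

theory Submission
  imports Defs
begin

lemma Tlev_nonatom: "X \<in> Tlev at mm M n \<Longrightarrow> \<not> at X"
  by (induction n) auto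

lemma Tlev_mono: "m \<le> n \<Longrightarrow> Tlev at mm M m \<subseteq> Tlev at mm M n"
proof (induction n)
  case 0 then show ?case by simp
next
  case (Suc n) then show ?case by (cases "m = Suc n") auto
qed

lemma Tlev_elems: "X \<in> Tlev at mm M (Suc n) \<Longrightarrow> mm X - M \<subseteq> Tlev at mm M n"
proof (induction n arbitrary: X)
  case 0 then show ?case by auto
next
  case (Suc n)
  then show ?case using Tlev_mono[of n "Suc n" at mm M] by auto
qed

lemma lev_stable: "Z \<in> Tlev atV mmV M n \<Longrightarrow>
   PPb_lev atV mmV M atW mmW f (k + n) Z = PPb_lev atV mmV M atW mmW f n Z"
proof (induction k)
  case 0 then show ?case by simp
next
  case (Suc k)
  have "Z \<in> Tlev atV mmV M (k + n)" using Suc.prems Tlev_mono[of n "k+n" atV mmV M] by auto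
  then show ?case using Suc by simp
qed

lemma lev_map: assumes "Z \<in> Tlev atV mmV M n"
  shows "PPb_lev atV mmV M atW mmW f n Z = PPb_map atV mmV M atW mmW f Z"
proof -
  define L where "L = (LEAST n. Z \<in> Tlev atV mmV M n)"
  have L1: "Z \<in> Tlev atV mmV M L" unfolding L_def using assms by (rule LeastI)
  have L2: "L \<le> n" unfolding L_def using assms by (rule Least_le)
  have "PPb_lev atV mmV M atW mmW f ((n - L) + L) Z = PPb_lev atV mmV M atW mmW f L Z"
    by (rule lev_stable[OF L1])
  then show ?thesis using L2 unfolding PPb_map_def L_def[symmetric] by simp
qed

lemma uu_atom: "ur_universe at mm M \<Longrightarrow> x \<in> M \<Longrightarrow> at x"
  unfolding ur_universe_def by blast
lemma uu_ext: "ur_universe at mm M \<Longrightarrow> \<not> at X \<Longrightarrow> \<not> at Y \<Longrightarrow> mm X = mm Y \<Longrightarrow> X = Y"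
  unfolding ur_universe_def by blast
lemma uu_ex0: "ur_universe at mm M \<Longrightarrow> S \<subseteq> M \<Longrightarrow> \<exists>X. \<not> at X \<and> mm X = S"
  unfolding ur_universe_def by blast
lemma uu_exn: "ur_universe at mm M \<Longrightarrow> S \<subseteq> Tlev at mm M n \<Longrightarrow> \<exists>X. \<not> at X \<and> mm X = S"
  unfolding ur_universe_def by blast

lemma lev_prop:
  assumes V: "ur_universe atV mmV M" and W: "ur_universe atW mmW N"
    and fM: "f ` M \<subseteq> N"
  shows "X \<in> Tlev atV mmV M n \<Longrightarrow>
    PPb_lev atV mmV M atW mmW f n X \<in> Tlev atW mmW N n \<and>
    mmW (PPb_lev atV mmV M atW mmW f n X) =
      f ` (mmV X \<inter> M) \<union> PPb_map atV mmV M atW mmW f ` (mmV X - M)"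
proof (induction n arbitrary: X)
  case 0
  let ?S = "f ` (mmV X \<inter> M) \<union> (\<lambda>_. undefined) ` (mmV X - M)"
  have sub: "mmV X \<subseteq> M" using 0 by simp
  have S: "?S = f ` mmV X" using sub by auto
  have S': "f ` (mmV X \<inter> M) \<union> PPb_map atV mmV M atW mmW f ` (mmV X - M) = f ` mmV X"
    using sub by auto
  have "\<exists>Y. \<not> atW Y \<and> mmW Y = f ` mmV X"
  proof (rule uu_ex0[OF W])
    show "f ` mmV X \<subseteq> N" using fM sub by blast
  qed
  then have "\<exists>Y. \<not> atW Y \<and> mmW Y = ?S" by (simp only: S)
  then have H: "\<not> atW (PPb_step mmV M atW mmW f (\<lambda>_. undefined) X) \<and> mmW (PPb_step mmV M atW mmW f (\<lambda>_. undefined) X) = ?S"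
    unfolding PPb_step_def by (rule someI_ex)
  have e: "PPb_lev atV mmV M atW mmW f 0 X = PPb_step mmV M atW mmW f (\<lambda>_. undefined) X" by simp
  have "mmW (PPb_lev atV mmV M atW mmW f 0 X) = f ` mmV X" using H e S by simp
  moreover have "PPb_lev atV mmV M atW mmW f 0 X \<in> Tlev atW mmW N 0"
    using H e S sub fM by auto
  ultimately show ?case using S' by simp
next
  case (Suc n)
  show ?case
  proof (cases "X \<in> Tlev atV mmV M n")
    case True
    have e: "PPb_lev atV mmV M atW mmW f (Suc n) X = PPb_lev atV mmV M atW mmW f n X"
      using True by simp
    show ?thesis unfolding e using Suc.IH[OF True] by simp
  next
    case False
    have sub: "mmV X \<subseteq> Tlev atV mmV M n" using Suc.prems False by simp
    have na: "\<not> atV X" using Suc.prems Tlev_nonatom by metis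
    have disj: "mmV X \<inter> M = {}"
      using sub uu_atom[OF V] Tlev_nonatom[of _ atV mmV M n] by blast
    let ?g = "PPb_lev atV mmV M atW mmW f n"
    let ?S = "f ` (mmV X \<inter> M) \<union> ?g ` (mmV X - M)"
    have S: "?S = ?g ` mmV X" using disj by auto
    have S2: "?g ` (mmV X - M) = PPb_map atV mmV M atW mmW f ` (mmV X - M)"
    proof (rule image_cong[OF refl])
      fix x assume "x \<in> mmV X - M"
      then have "x \<in> Tlev atV mmV M n" using sub by blast
      then show "?g x = PPb_map atV mmV M atW mmW f x" by (rule lev_map)
    qed
    have inW: "?g ` mmV X \<subseteq> Tlev atW mmW N n" using Suc.IH sub by blast
    have "\<exists>Y. \<not> atW Y \<and> mmW Y = ?g ` mmV X"
      using uu_exn[OF W inW] .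
    then have "\<exists>Y. \<not> atW Y \<and> mmW Y = ?S" by (simp only: S)
    then have H: "\<not> atW (PPb_step mmV M atW mmW f ?g X) \<and> mmW (PPb_step mmV M atW mmW f ?g X) = ?S"
      unfolding PPb_step_def by (rule someI_ex)
    have e: "PPb_lev atV mmV M atW mmW f (Suc n) X = PPb_step mmV M atW mmW f ?g X"
      using False by simp
    have m1: "mmW (PPb_step mmV M atW mmW f ?g X) = f ` (mmV X \<inter> M) \<union> PPb_map atV mmV M atW mmW f ` (mmV X - M)"
      using H S2 by simp
    have m2: "PPb_step mmV M atW mmW f ?g X \<in> Tlev atW mmW N (Suc n)"
      using H S inW by simp
    show ?thesis unfolding e using m1 m2 by blast
  qed
qed

lemma map_prop:
  assumes V: "ur_universe atV mmV M" and W: "ur_universe atW mmW N"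
    and fM: "f ` M \<subseteq> N" and X: "X \<in> Tlev atV mmV M n"
  shows "\<not> atW (PPb_map atV mmV M atW mmW f X) \<and>
    mmW (PPb_map atV mmV M atW mmW f X) =
      f ` (mmV X \<inter> M) \<union> PPb_map atV mmV M atW mmW f ` (mmV X - M)"
  using lev_prop[OF V W fM X] lev_map[OF X, of atW mmW f] Tlev_nonatom by metis

lemma inj_levels:
  assumes V: "ur_universe atV mmV M" and W: "ur_universe atW mmW N"
    and fM: "f ` M \<subseteq> N" and inj: "inj_on f M"
  shows "inj_on (PPb_map atV mmV M atW mmW f) (Tlev atV mmV M n)"
proof -
  let ?P = "PPb_map atV mmV M atW mmW f"
  have step: "X = Y" if S: "inj_on ?P S" and X: "X \<in> Tlev atV mmV M n" and Y: "Y \<in> Tlev atV mmV M n"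
    and XS: "mmV X - M \<subseteq> S" and YS: "mmV Y - M \<subseteq> S" and eq: "?P X = ?P Y" for S X Y n
  proof -
    have mX: "mmW (?P X) = f ` (mmV X \<inter> M) \<union> ?P ` (mmV X - M)"
      using map_prop[OF V W fM X] by blast
    have mY: "mmW (?P Y) = f ` (mmV Y \<inter> M) \<union> ?P ` (mmV Y - M)"
      using map_prop[OF V W fM Y] by blast
    have atN: "\<forall>y\<in>N. atW y" using uu_atom[OF W] by blast
    have naP: "\<not> atW (?P Z)" if "Z \<in> Tlev atV mmV M k" for Z k
      using map_prop[OF V W fM that] by blast
    have Xsub: "mmV X - M \<subseteq> Tlev atV mmV M (n - 1)" and Ysub: "mmV Y - M \<subseteq> Tlev atV mmV M (n - 1)"
    proof -
      show "mmV X - M \<subseteq> Tlev atV mmV M (n - 1)"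
        using X Tlev_elems[of X atV mmV M "n-1"] by (cases n) auto
      show "mmV Y - M \<subseteq> Tlev atV mmV M (n - 1)"
        using Y Tlev_elems[of Y atV mmV M "n-1"] by (cases n) auto
    qed
    let ?A = "f ` (mmV X \<inter> M)" and ?B = "?P ` (mmV X - M)"
    let ?A' = "f ` (mmV Y \<inter> M)" and ?B' = "?P ` (mmV Y - M)"
    have Aat: "\<forall>z\<in>?A \<union> ?A'. atW z" using fM atN by blast
    have Bna: "\<forall>z\<in>?B \<union> ?B'. \<not> atW z" using naP Xsub Ysub by blast
    have U: "?A \<union> ?B = ?A' \<union> ?B'" using mX mY eq by simp
    have "?A = ?A'"
    proof -
      have "?A = {z \<in> ?A \<union> ?B. atW z}" using Aat Bna by blast
      also have "\<dots> = {z \<in> ?A' \<union> ?B'. atW z}" using U by simp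
      also have "\<dots> = ?A'" using Aat Bna by blast
      finally show ?thesis .
    qed
    then have e1: "mmV X \<inter> M = mmV Y \<inter> M"
      using inj_on_image_eq_iff[OF inj] by blast
    have "?B = ?B'"
    proof -
      have "?B = {z \<in> ?A \<union> ?B. \<not> atW z}" using Aat Bna by blast
      also have "\<dots> = {z \<in> ?A' \<union> ?B'. \<not> atW z}" using U by simp
      also have "\<dots> = ?B'" using Aat Bna by blast
      finally show ?thesis .
    qed
    then have e2: "mmV X - M = mmV Y - M"
      using inj_on_image_eq_iff[OF S XS YS] by blast
    have "mmV X = mmV Y" using e1 e2 by blast
    moreover have "\<not> atV X" "\<not> atV Y" using X Y Tlev_nonatom by metis+
    ultimately show "X = Y" using uu_ext[OF V] by blast
  qed
  show ?thesis
  proof (induction n)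
    case 0
    show ?case
    proof (rule inj_onI)
      fix X Y assume X: "X \<in> Tlev atV mmV M 0" and Y: "Y \<in> Tlev atV mmV M 0" and "?P X = ?P Y"
      then show "X = Y" using step[of "{}" X 0 Y] by auto
    qed
  next
    case (Suc n)
    show ?case
    proof (rule inj_onI)
      fix X Y assume X: "X \<in> Tlev atV mmV M (Suc n)" and Y: "Y \<in> Tlev atV mmV M (Suc n)" and "?P X = ?P Y"
      then show "X = Y" using step[OF Suc.IH X Y] Tlev_elems[OF X] Tlev_elems[OF Y] by auto
    qed
  qed
qed

theorem mainTheorem5:
  fixes atV :: "'v \<Rightarrow> bool" and mmV :: "'v \<Rightarrow> 'v set" and M :: "'v set"
    and atW :: "'w \<Rightarrow> bool" and mmW :: "'w \<Rightarrow> 'w set" and N :: "'w set"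
    and f :: "'v \<Rightarrow> 'w"
  assumes "ur_universe atV mmV M"
    and "ur_universe atW mmW N"
    and "f ` M \<subseteq> N"
    and "inj_on f M"
  shows "inj_on (PPb_map atV mmV M atW mmW f) (PPb atV mmV M)"
proof (rule inj_onI)
  fix X Y assume X: "X \<in> PPb atV mmV M" and Y: "Y \<in> PPb atV mmV M"
    and eq: "PPb_map atV mmV M atW mmW f X = PPb_map atV mmV M atW mmW f Y"
  obtain a where a: "X \<in> Tlev atV mmV M a" using X unfolding PPb_def by blast
  obtain b where b: "Y \<in> Tlev atV mmV M b" using Y unfolding PPb_def by blast
  have "X \<in> Tlev atV mmV M (max a b)" "Y \<in> Tlev atV mmV M (max a b)"
    using a b Tlev_mono[of a "max a b" atV mmV M] Tlev_mono[of b "max a b" atV mmV M] by auto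
  then show "X = Y" using inj_levels[OF assms, of "max a b"] eq by (auto dest: inj_onD)
qed

end
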